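(* Let $\alpha,\beta\in\mathbb{R}$ and $\eta\in\{1,-1\}$, and let $G_4$ be the connected, simply connected Lie group whose Lie algebra $\mathfrak{g}_4$ has a basis $\{e_1,e_2,e_3\}$ with $[e_1,e_2]=-e_2+(2\eta-\beta)e_3$, $[e_1,e_3]=-\beta e_2+e_3$, $[e_2,e_3]=\alpha e_1$, equipped with the left-invariant Lorentzian metric $g$ for which $\{e_1,e_2,e_3\}$ is pseudo-orthonormal with $e_3$ timelike, and with the product structure $J$. Let $\lambda_0,c\in\mathbb{R}$. Then there exists a derivation $D$ of $\mathfrak{g}_4$ with $\widetilde{\mathrm{Ric}}^0=(s^0\lambda_0+c)\mathrm{Id}+D$ (i.e. $(G_4,g,J)$ is an algebraic Schouten soliton associated to the canonical connection $\nabla^0$) if and only if $\alpha=0$, $\beta=\eta$ and $c=0$.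
   Context: Pseudo-orthonormal means $g(e_1,e_1)=g(e_2,e_2)=1$, $g(e_3,e_3)=-1$, $g(e_i,e_j)=0$ for $i\neq j$; left-invariant tensors are identified with their values on $\mathfrak{g}$. $\nabla$ is the Levi-Civita connection of $g$. The product structure $J$ is the left-invariant endomorphism with $Je_1=e_1$, $Je_2=e_2$, $Je_3=-e_3$. The canonical connection is $\nabla^0_XY=\nabla_XY-\frac12(\nabla_XJ)JY$, and the Kobayashi–Nomizu connection is $\nabla^1_XY=\nabla^0_XY-\frac14[(\nabla_YJ)JX-(\nabla_{JY}J)X]$. For $k=0,1$: $R^k(X,Y)Z=\nabla^k_X\nabla^k_YZ-\nabla^k_Y\nabla^k_XZ-\nabla^k_{[X,Y]}Z$; $\rho^k(X,Y)=-g(R^k(X,e_1)Y,e_1)-g(R^k(X,e_2)Y,e_2)+g(R^k(X,e_3)Y,e_3)$; $\widetilde\rho^k(X,Y)=\frac12(\rho^k(X,Y)+\rho^k(Y,X))$; $\widetilde{\mathrm{Ric}}^k$ is defined by $\widetilde\rho^k(X,Y)=g(\widetilde{\mathrm{Ric}}^k(X),Y)$; and $s^k=\widetilde\rho^k(e_1,e_1)+\widetilde\rho^k(e_2,e_2)-\widetilde\rho^k(e_3,e_3)$. A derivation of $\mathfrak{g}$ is a linear map $D$ with $D[X,Y]=[DX,Y]+[X,DY]$. $(G,g,J)$ is an algebraic Schouten soliton associated to $\nabla^k$ (with real constants $\lambda_0,c$) if $\widetilde{\mathrm{Ric}}^k=(s^k\lambda_0+c)\mathrm{Id}+D$ for some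 derivation $D$. *)

theory Defs
  imports "HOL-Analysis.Analysis"
begin

text \<open>A Lie bracket is a
function br :: real^3 => real^3 => real^3. All left-invariant tensors are
identified with their values on the Lie algebra.\<close>

type_synonym vec3 = "real^3"
type_synonym bracket = "vec3 \<Rightarrow> vec3 \<Rightarrow> vec3"

definition ebas :: "3 \<Rightarrow> vec3" where
  "ebas i = axis i 1"

definition gL :: "vec3 \<Rightarrow> vec3 \<Rightarrow> real" where
  "gL x y = x$1 * y$1 + x$2 * y$2 - x$3 * y$3"

definition eps :: "3 \<Rightarrow> real" where
  "eps i = (if i = 3 then -1 else 1)"

text \<open>Levi-Civita connection on left-invariant fields (Koszul formula):
  2 g(nabla_X Y, Z) = g([X,Y],Z) - g([Y,Z],X) + g([Z,X],Y).\<close>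
definition LC :: "bracket \<Rightarrow> vec3 \<Rightarrow> vec3 \<Rightarrow> vec3" where
  "LC br X Y = (\<Sum>k\<in>UNIV. (eps k * ((gL (br X Y) (ebas k) - gL (br Y (ebas k)) X
                 + gL (br (ebas k) X) Y) / 2)) *\<^sub>R ebas k)"

definition prodJ :: "vec3 \<Rightarrow> vec3" where
  "prodJ x = vector [x$1, x$2, - x$3]"

definition covJ :: "bracket \<Rightarrow> vec3 \<Rightarrow> vec3 \<Rightarrow> vec3" where
  "covJ br X Y = LC br X (prodJ Y) - prodJ (LC br X Y)"

definition can0 :: "bracket \<Rightarrow> vec3 \<Rightarrow> vec3 \<Rightarrow> vec3" where
  "can0 br X Y = LC br X Y - (1/2) *\<^sub>R covJ br X (prodJ Y)"

definition curv0 :: "bracket \<Rightarrow> vec3 \<Rightarrow> vec3 \<Rightarrow> vec3 \<Rightarrow> vec3" where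
  "curv0 br X Y Z = can0 br X (can0 br Y Z) - can0 br Y (can0 br X Z) - can0 br (br X Y) Z"

definition rho0 :: "bracket \<Rightarrow> vec3 \<Rightarrow> vec3 \<Rightarrow> real" where
  "rho0 br X Y = - gL (curv0 br X (ebas 1) Y) (ebas 1) - gL (curv0 br X (ebas 2) Y) (ebas 2)
                 + gL (curv0 br X (ebas 3) Y) (ebas 3)"

definition rhoS0 :: "bracket \<Rightarrow> vec3 \<Rightarrow> vec3 \<Rightarrow> real" where
  "rhoS0 br X Y = (rho0 br X Y + rho0 br Y X) / 2"

text \<open>Symmetrized Ricci operator: g(RicS0 X, Y) = rhoS0 X Y.\<close>
definition RicS0 :: "bracket \<Rightarrow> vec3 \<Rightarrow> vec3" where
  "RicS0 br X = (\<Sum>k\<in>UNIV. (eps k * rhoS0 br X (ebas k)) *\<^sub>R ebas k)"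

definition scal0 :: "bracket \<Rightarrow> real" where
  "scal0 br = rhoS0 br (ebas 1) (ebas 1) + rhoS0 br (ebas 2) (ebas 2) - rhoS0 br (ebas 3) (ebas 3)"

definition is_derivation :: "bracket \<Rightarrow> (vec3 \<Rightarrow> vec3) \<Rightarrow> bool" where
  "is_derivation br D \<longleftrightarrow> linear D \<and> (\<forall>X Y. D (br X Y) = br (D X) Y + br X (D Y))"

definition alg_schouten_soliton0 :: "bracket \<Rightarrow> real \<Rightarrow> real \<Rightarrow> bool" where
  "alg_schouten_soliton0 br lam0 c \<longleftrightarrow>
     (\<exists>D. is_derivation br D \<and> (\<forall>X. RicS0 br X = (scal0 br * lam0 + c) *\<^sub>R X + D X))"

definition br4 :: "real \<Rightarrow> real \<Rightarrow> real \<Rightarrow> bracket" where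
  "br4 \<alpha> \<beta> \<eta> X Y =
     (X$1 * Y$2 - X$2 * Y$1) *\<^sub>R vector [0, -1, 2*\<eta> - \<beta>]
   + (X$1 * Y$3 - X$3 * Y$1) *\<^sub>R vector [0, -\<beta>, 1]
   + (X$2 * Y$3 - X$3 * Y$2) *\<^sub>R vector [\<alpha>, 0, 0]"

end

theory Submission
  imports Defs
begin
lemma ebas_c[simp]: "ebas i $ j = (if i = j then 1 else 0)" by (simp add: ebas_def axis_def)
lemma eps_c[simp]: "eps 1 = 1" "eps 2 = 1" "eps 3 = -1" by (simp_all add: eps_def)
lemma br4_c: "br4 a b h X Y = vector [a*(X$2*Y$3 - X$3*Y$2),
   -(X$1*Y$2 - X$2*Y$1) - b*(X$1*Y$3 - X$3*Y$1),
   (2*h-b)*(X$1*Y$2 - X$2*Y$1) + (X$1*Y$3 - X$3*Y$1)]"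
  by (simp add: br4_def vec_eq_iff forall_3 algebra_simps)
lemma LC_c: "LC (br4 a b h) X Y = (\<chi> k. eps k * ((gL (br4 a b h X Y) (ebas k) - gL (br4 a b h Y (ebas k)) X
                 + gL (br4 a b h (ebas k) X) Y) / 2))"
  by (simp add: LC_def vec_eq_iff sum_3 forall_3)
lemma can0_c: "can0 (br4 a b h) X Y = (X$2 + (h + a/2) * X$3) *\<^sub>R vector [-Y$2, Y$1, 0]"
  by (simp add: can0_def covJ_def LC_c prodJ_def vec_eq_iff forall_3 br4_c gL_def algebra_simps field_simps)
lemma curv0_c: "curv0 (br4 a b h) X Y Z = - (br4 a b h X Y $ 2 + (h + a/2) * br4 a b h X Y $ 3) *\<^sub>R vector [-Z$2, Z$1, 0]"
  by (simp add: curv0_def can0_c br4_c vec_eq_iff forall_3 algebra_simps field_simps)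
lemma rhoS0_c: "rhoS0 (br4 a b h) X Y = (-1+2*h^2-b*h+a*h-a*b/2) * (X$1*Y$1 + X$2*Y$2)
   - ((b-h)/2 - a/4) * (X$2*Y$3 + X$3*Y$2)"
  by (simp add: rhoS0_def rho0_def curv0_c br4_c gL_def power2_eq_square algebra_simps field_simps)
lemma RicS0_c: "RicS0 (br4 a b h) X = vector [(-1+2*h^2-b*h+a*h-a*b/2) * X$1,
   (-1+2*h^2-b*h+a*h-a*b/2) * X$2 - ((b-h)/2 - a/4) * X$3, ((b-h)/2 - a/4) * X$2]"
  by (simp add: RicS0_def rhoS0_c vec_eq_iff forall_3 sum_3 algebra_simps field_simps)
lemma scal0_c: "scal0 (br4 a b h) = 2*(-1+2*h^2-b*h+a*h-a*b/2)"
  by (simp add: scal0_def rhoS0_c algebra_simps)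
lemma fwd:
  fixes a b h lam0 c :: real
  assumes h: "h = 1 \<or> h = -1" and S: "alg_schouten_soliton0 (br4 a b h) lam0 c"
  shows "a = 0 \<and> b = h \<and> c = 0"
proof -
  define k where "k = scal0 (br4 a b h) * lam0 + c"
  obtain D where der: "is_derivation (br4 a b h) D" and DX: "\<And>X. RicS0 (br4 a b h) X = k *\<^sub>R X + D X"
    using S unfolding alg_schouten_soliton0_def k_def by blast
  have DX': "\<And>X. D X = RicS0 (br4 a b h) X - k *\<^sub>R X" using DX by (metis add_diff_cancel_left')
  have dd: "\<And>X Y. D (br4 a b h X Y) = br4 a b h (D X) Y + br4 a b h X (D Y)"
    using der unfolding is_derivation_def by blast
  have e12: "D (br4 a b h (ebas 1) (ebas 2)) = br4 a b h (D (ebas 1)) (ebas 2) + br4 a b h (ebas 1) (D (ebas 2))" by (rule dd)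
  have e13: "D (br4 a b h (ebas 1) (ebas 3)) = br4 a b h (D (ebas 1)) (ebas 3) + br4 a b h (ebas 1) (D (ebas 3))" by (rule dd)
  have e23: "D (br4 a b h (ebas 2) (ebas 3)) = br4 a b h (D (ebas 2)) (ebas 3) + br4 a b h (ebas 2) (D (ebas 3))" by (rule dd)
  note ee = e12 e13 e23
  note ee = ee[unfolded DX' RicS0_c br4_c vec_eq_iff forall_3]
  define r where "r = -1+2*h^2-b*h+a*h-a*b/2"
  define q where "q = (b-h)/2 - a/4"
  have q4: "a = 2*(b-h) - 4*q" unfolding q_def by (simp add: field_simps)
  have E1: "a*k = 0" using ee by (simp add: algebra_simps field_simps)
  have E2: "r - k = 2*q*(h-b)" using ee unfolding r_def q_def by (simp add: algebra_simps field_simps)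
  have E3: "k*b = -2*q" using ee unfolding r_def q_def by (simp add: algebra_simps field_simps)
  have E4: "-2*q - (2*h-b)*k = 2*(r-k)*(2*h-b)" using ee unfolding r_def q_def by (simp add: algebra_simps field_simps)
  have h2: "h*h = 1" using h by auto
  have a0: "a = 0"
  proof (rule ccontr)
    assume an: "a \<noteq> 0"
    then have k0: "k = 0" using E1 by simp
    then have "q = 0" using E3 by simp
    then have r0: "r = 0" and ab: "a = 2*(b-h)" using E2 k0 q4 by auto
    have "r = -((b-h)*(b-h))" unfolding r_def ab using h2 by (simp add: power2_eq_square field_simps)
    then have "(b-h)*(b-h) = 0" using r0 by simp
    then have "b = h" by simp
    then show False using an ab by simp
  qed
  have qv: "q = (b-h)/2" unfolding q_def a0 by simp
  have rv: "r = 1 - b*h" unfolding r_def a0 using h2 by (simp add: power2_eq_square)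
  have kv: "k = (b-h)*(b-2*h)" using E2 qv rv h2 by algebra
  have "(b-h)*((b-h)*(b-h)) = 0"
  proof -
    have "k*b + 2*q = 0" using E3 by simp
    then have "(b-h)*(b-2*h)*b + (b-h) = 0" using kv qv by (simp add: field_simps)
    then show ?thesis using h2 by algebra
  qed
  then have bh: "b = h" by simp
  then have "k = 0" "r = 0" using kv rv h2 by auto
  moreover have "scal0 (br4 a b h) = 2*r" unfolding scal0_c r_def by simp
  ultimately have "c = 0" using k_def by simp
  then show ?thesis using a0 bh by simp
qed
lemma bwd:
  fixes h lam0 :: real
  assumes h: "h = 1 \<or> h = -1"
  shows "alg_schouten_soliton0 (br4 0 h h) lam0 0"
proof -
  have h2: "h^2 = 1" using h by auto
  have R: "\<And>X. RicS0 (br4 0 h h) X = 0" unfolding RicS0_c using h2 by (simp add: vec_eq_iff forall_3 power2_eq_square)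
  have s: "scal0 (br4 0 h h) = 0" unfolding scal0_c using h2 by (simp add: power2_eq_square)
  have z: "\<And>Y. br4 0 h h 0 Y = 0" "\<And>X. br4 0 h h X 0 = 0" by (simp_all add: br4_def)
  have "is_derivation (br4 0 h h) (\<lambda>X. 0)" unfolding is_derivation_def by (simp add: z linear_zero)
  then show ?thesis unfolding alg_schouten_soliton0_def R s by (intro exI[of _ "\<lambda>X. 0"]) simp
qed

theorem theorem4p8:
  fixes \<alpha> \<beta> \<eta> lam0 c :: real
  assumes "\<eta> = 1 \<or> \<eta> = -1"
  shows "alg_schouten_soliton0 (br4 \<alpha> \<beta> \<eta>) lam0 c \<longleftrightarrow> (\<alpha> = 0 \<and> \<beta> = \<eta> \<and> c = 0)"
  using fwd[OF assms] bwd[OF assms] by blast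
end
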